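(* In the Standing Setup below, with $c\in\sigma$ the point of the inscribed triple of $\Delta_1=[1,g]\cup\sigma\cup[1,hg]$ lying on $\sigma=[g,hg]$, there is a constant $K_2>0$, depending only on $G,A,H$ (and not on the bigon), such that: if $\zeta$ is a subsegment of $\sigma$ whose midpoint is $c$ and which is contained in the closed $\delta$-neighborhood of $\alpha$ or in the closed $\delta$-neighborhood of $\beta$, then $l(\zeta)\le K_2$.
   Context: Standing Setup. $G$ is a word-hyperbolic group with marked finite generating set $\pi:A\to G$ (a finite alphabet $A$ with $\pi(A)$ generating $G$); $X=\Gamma(G,A)$ is its Cayley graph with word metric $d_X$, $|g|_X=d_X(1,g)$; $\delta\ge10$ is an integer such that all geodesic triangles of $X$ are $\delta$-trim; $H\le G$ is a subgroup that is $E$-quasiconvex in $X$ (every geodesic with endpoints in $H$ lies in the $E$-neighborhood of $H$). $Y=\Gamma(G/H,A)$ is the relative Cayley graph: vertices the right cosets $Hg$, and for each $(Hg,a)$ an edge from $Hg$ to $Hg\pi(a)$ labeled $a$, edges of length one. A path is near geodesic if it is $p_1p'p_2$ with $p_1,p',p_2$ geodesic and $l(p_1),l(p_2)\le1$. Key Lemma (Lemma 3.3): there is an integer $K_1>0$ such that whenever $g,f$ are $|\cdot|_X$-shortest in $Hg,Hf$, $w$ labels a near geodesic path in $Y$ from $Hg$ to $Hf$ and $h\in H$ satisfies $hf=g\bar w$, then $|h|_X\le K_1$. Bigon data: $g,f\in G$ are $|\cdot|_X$-shortest elements of their cosets; $\alpha',\beta'$ are near geodesic paths in $Y$ from $Hg$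 to $Hf$ with labels $w,u$; $h_1,h_2\in H$ satisfy $h_1g\bar w=f=h_2g\bar u$ (so $|h_i|_X\le K_1$); $f'=g\bar w$ and $h=h_1^{-1}h_2$, so $f'=hg\bar u$ and $|h|_X\le 2K_1$. Fix geodesics $[1,g]$, $[1,hg]$, $\sigma=[g,hg]$, $\alpha=[g,f']$, $\beta=[hg,f']$ in $X$. Inscribed triple: for a geodesic triangle with sides $[z,x],[z,y],[x,y]$, it is the unique points $p\in[z,x]$, $q\in[z,y]$, $r\in[x,y]$ with $d(z,p)=d(z,q)=(x,y)_z$, $d(x,p)=d(x,r)=(y,z)_x$, $d(y,q)=d(y,r)=(x,z)_y$, where $(x,y)_z=\frac12[d(z,x)+d(z,y)-d(x,y)]$. $\delta$-trim: for the sides $[z,x],[z,y]$, points at equal distance $\le(x,y)_z$ from $z$ are within $\delta$ of each other, and similarly at the vertices $x$ and $y$. *)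

theory Defs
  imports "HOL-Algebra.Algebra" "HOL-Analysis.Analysis"
begin

text \<open>A word over A and its inverses: a list of letters (a, True) = a, (a, False) = a^-1.\<close>

type_synonym 'a word = "('a \<times> bool) list"

definition word_in :: "'a set \<Rightarrow> 'a word \<Rightarrow> bool" where
  "word_in A w \<longleftrightarrow> set (map fst w) \<subseteq> A"

definition evalw :: "('g, 'b) monoid_scheme \<Rightarrow> ('a \<Rightarrow> 'g) \<Rightarrow> 'a word \<Rightarrow> 'g" where
  "evalw G \<pi> w = foldr (\<lambda>(a, b) acc. (if b then \<pi> a else inv\<^bsub>G\<^esub> (\<pi> a)) \<otimes>\<^bsub>G\<^esub> acc) w \<one>\<^bsub>G\<^esub>"

definition wlen :: "('g, 'b) monoid_scheme \<Rightarrow> 'a set \<Rightarrow> ('a \<Rightarrow> 'g) \<Rightarrow> 'g \<Rightarrow> nat" where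
  "wlen G A \<pi> g = (LEAST n. \<exists>w. length w = n \<and> word_in A w \<and> evalw G \<pi> w = g)"

definition wdist :: "('g, 'b) monoid_scheme \<Rightarrow> 'a set \<Rightarrow> ('a \<Rightarrow> 'g) \<Rightarrow> 'g \<Rightarrow> 'g \<Rightarrow> real" where
  "wdist G A \<pi> x y = real (wlen G A \<pi> (inv\<^bsub>G\<^esub> x \<otimes>\<^bsub>G\<^esub> y))"

text \<open>A point of X is a vertex, or an interior point of the edge (g,a) from g to g*pi(a),
  at distance t (0 < t < 1) from g.\<close>

datatype ('g, 'a) cpoint = Vx 'g | Ed 'g 'a real

definition valid_pt :: "('g, 'b) monoid_scheme \<Rightarrow> 'a set \<Rightarrow> ('g, 'a) cpoint \<Rightarrow> bool" where
  "valid_pt G A p = (case p of Vx x \<Rightarrow> x \<in> carrier G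
                       | Ed g a t \<Rightarrow> g \<in> carrier G \<and> a \<in> A \<and> 0 < t \<and> t < 1)"

fun ends :: "('g, 'b) monoid_scheme \<Rightarrow> ('a \<Rightarrow> 'g) \<Rightarrow> ('g, 'a) cpoint \<Rightarrow> ('g \<times> real) list" where
  "ends G \<pi> (Vx x) = [(x, 0)]"
| "ends G \<pi> (Ed g a t) = [(g, t), (g \<otimes>\<^bsub>G\<^esub> \<pi> a, 1 - t)]"

fun same_edge :: "('g, 'a) cpoint \<Rightarrow> ('g, 'a) cpoint \<Rightarrow> real set" where
  "same_edge (Ed g a t) (Ed g' a' s) = (if g = g' \<and> a = a' then {\<bar>t - s\<bar>} else {})"
| "same_edge _ _ = {}"

text \<open>The path metric of the Cayley graph with edges of length one.\<close>

definition cdist :: "('g, 'b) monoid_scheme \<Rightarrow> 'a set \<Rightarrow> ('a \<Rightarrow> 'g)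
                     \<Rightarrow> ('g, 'a) cpoint \<Rightarrow> ('g, 'a) cpoint \<Rightarrow> real" where
  "cdist G A \<pi> p q = Min ({d1 + wdist G A \<pi> x y + d2 | x d1 y d2.
                             (x, d1) \<in> set (ends G \<pi> p) \<and> (y, d2) \<in> set (ends G \<pi> q)}
                         \<union> same_edge p q)"

definition geod :: "('g, 'b) monoid_scheme \<Rightarrow> 'a set \<Rightarrow> ('a \<Rightarrow> 'g)
                   \<Rightarrow> (real \<Rightarrow> ('g, 'a) cpoint) \<Rightarrow> real \<Rightarrow> ('g, 'a) cpoint \<Rightarrow> ('g, 'a) cpoint \<Rightarrow> bool" where
  "geod G A \<pi> \<gamma> L p q \<longleftrightarrow> 0 \<le> L \<and> \<gamma> 0 = p \<and> \<gamma> L = q \<and>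
     (\<forall>t \<in> {0..L}. valid_pt G A (\<gamma> t)) \<and>
     (\<forall>s \<in> {0..L}. \<forall>t \<in> {0..L}. cdist G A \<pi> (\<gamma> s) (\<gamma> t) = \<bar>s - t\<bar>)"

definition revp :: "(real \<Rightarrow> 'p) \<Rightarrow> real \<Rightarrow> real \<Rightarrow> 'p" where
  "revp \<gamma> L = (\<lambda>t. \<gamma> (L - t))"

text \<open>Trimness at the common start vertex of two sides p (length Lp) and q (length Lq),
  the opposite side having length Lr.\<close>

definition trim_at :: "('g, 'b) monoid_scheme \<Rightarrow> 'a set \<Rightarrow> ('a \<Rightarrow> 'g) \<Rightarrow> real
      \<Rightarrow> (real \<Rightarrow> ('g, 'a) cpoint) \<Rightarrow> real \<Rightarrow> (real \<Rightarrow> ('g, 'a) cpoint) \<Rightarrow> real \<Rightarrow> real \<Rightarrow> bool" where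
  "trim_at G A \<pi> \<delta> p Lp q Lq Lr \<longleftrightarrow>
     (\<forall>t. 0 \<le> t \<and> t \<le> (Lp + Lq - Lr) / 2 \<longrightarrow> cdist G A \<pi> (p t) (q t) \<le> \<delta>)"

definition all_trim :: "('g, 'b) monoid_scheme \<Rightarrow> 'a set \<Rightarrow> ('a \<Rightarrow> 'g) \<Rightarrow> real \<Rightarrow> bool" where
  "all_trim G A \<pi> \<delta> \<longleftrightarrow>
     (\<forall>x y z p1 L1 p2 L2 p3 L3.
        valid_pt G A x \<and> valid_pt G A y \<and> valid_pt G A z \<and>
        geod G A \<pi> p1 L1 z x \<and> geod G A \<pi> p2 L2 z y \<and> geod G A \<pi> p3 L3 x y \<longrightarrow>
          trim_at G A \<pi> \<delta> p1 L1 p2 L2 L3 \<and>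
          trim_at G A \<pi> \<delta> (revp p1 L1) L1 p3 L3 L2 \<and>
          trim_at G A \<pi> \<delta> (revp p2 L2) L2 (revp p3 L3) L3 L1)"

definition quasiconvex :: "('g, 'b) monoid_scheme \<Rightarrow> 'a set \<Rightarrow> ('a \<Rightarrow> 'g) \<Rightarrow> 'g set \<Rightarrow> real \<Rightarrow> bool" where
  "quasiconvex G A \<pi> H E \<longleftrightarrow>
     (\<forall>x \<in> H. \<forall>y \<in> H. \<forall>\<gamma> L. geod G A \<pi> \<gamma> L (Vx x) (Vx y) \<longrightarrow>
        (\<forall>t \<in> {0..L}. \<exists>k \<in> H. cdist G A \<pi> (\<gamma> t) (Vx k) \<le> E))"

text \<open>A path in Y is determined by its initial vertex Hx and its label w; it ends at H(x w).
  Distance in Y between Hx and Hy.\<close>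

definition ydist :: "('g, 'b) monoid_scheme \<Rightarrow> 'a set \<Rightarrow> ('a \<Rightarrow> 'g) \<Rightarrow> 'g set \<Rightarrow> 'g \<Rightarrow> 'g \<Rightarrow> nat" where
  "ydist G A \<pi> H x y = (LEAST n. \<exists>w. length w = n \<and> word_in A w \<and>
                           H #>\<^bsub>G\<^esub> (x \<otimes>\<^bsub>G\<^esub> evalw G \<pi> w) = H #>\<^bsub>G\<^esub> y)"

definition ygeod :: "('g, 'b) monoid_scheme \<Rightarrow> 'a set \<Rightarrow> ('a \<Rightarrow> 'g) \<Rightarrow> 'g set \<Rightarrow> 'g \<Rightarrow> 'a word \<Rightarrow> bool" where
  "ygeod G A \<pi> H x w \<longleftrightarrow> word_in A w \<and>
     length w = ydist G A \<pi> H x (x \<otimes>\<^bsub>G\<^esub> evalw G \<pi> w)"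

definition near_geod :: "('g, 'b) monoid_scheme \<Rightarrow> 'a set \<Rightarrow> ('a \<Rightarrow> 'g) \<Rightarrow> 'g set \<Rightarrow> 'g \<Rightarrow> 'a word \<Rightarrow> bool" where
  "near_geod G A \<pi> H x w \<longleftrightarrow>
     (\<exists>w1 w' w2. w = w1 @ w' @ w2 \<and> length w1 \<le> 1 \<and> length w2 \<le> 1 \<and>
        ygeod G A \<pi> H x w1 \<and>
        ygeod G A \<pi> H (x \<otimes>\<^bsub>G\<^esub> evalw G \<pi> w1) w' \<and>
        ygeod G A \<pi> H (x \<otimes>\<^bsub>G\<^esub> evalw G \<pi> w1 \<otimes>\<^bsub>G\<^esub> evalw G \<pi> w') w2)"

definition near_geod_from_to :: "('g, 'b) monoid_scheme \<Rightarrow> 'a set \<Rightarrow> ('a \<Rightarrow> 'g) \<Rightarrow> 'g set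
     \<Rightarrow> 'g \<Rightarrow> 'g \<Rightarrow> 'a word \<Rightarrow> bool" where
  "near_geod_from_to G A \<pi> H x y w \<longleftrightarrow> word_in A w \<and> near_geod G A \<pi> H x w \<and>
     H #>\<^bsub>G\<^esub> (x \<otimes>\<^bsub>G\<^esub> evalw G \<pi> w) = H #>\<^bsub>G\<^esub> y"

definition shortest_in_coset :: "('g, 'b) monoid_scheme \<Rightarrow> 'a set \<Rightarrow> ('a \<Rightarrow> 'g) \<Rightarrow> 'g set \<Rightarrow> 'g \<Rightarrow> bool" where
  "shortest_in_coset G A \<pi> H g \<longleftrightarrow> g \<in> carrier G \<and>
     (\<forall>x \<in> H #>\<^bsub>G\<^esub> g. wlen G A \<pi> g \<le> wlen G A \<pi> x)"

definition gprod :: "('g, 'b) monoid_scheme \<Rightarrow> 'a set \<Rightarrow> ('a \<Rightarrow> 'g) \<Rightarrow> 'g \<Rightarrow> 'g \<Rightarrow> 'g \<Rightarrow> real" where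
  "gprod G A \<pi> x y z = (wdist G A \<pi> z x + wdist G A \<pi> z y - wdist G A \<pi> x y) / 2"

end

theory Submission
  imports Defs
begin

definition winv :: "'a word \<Rightarrow> 'a word" where
  "winv w = rev (map (\<lambda>(a,b). (a, \<not> b)) w)"

context
  fixes G (structure) and A :: "'a set" and \<pi> :: "'a \<Rightarrow> 'g"
  assumes grp: "group G" and piA: "\<pi> ` A \<subseteq> carrier G"
begin

interpretation group G by (rule grp)

lemma word_in_append[simp]: "word_in A (w @ v) \<longleftrightarrow> word_in A w \<and> word_in A v"
  by (auto simp: word_in_def)

lemma word_in_Cons[simp]: "word_in A (x # v) \<longleftrightarrow> fst x \<in> A \<and> word_in A v"
  by (auto simp: word_in_def)

lemma word_in_Nil[simp]: "word_in A []"
  by (auto simp: word_in_def)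

lemma evalw_Nil[simp]: "evalw G \<pi> [] = \<one>"
  by (simp add: evalw_def)

lemma evalw_Cons: "evalw G \<pi> ((a,b) # v) = (if b then \<pi> a else inv (\<pi> a)) \<otimes> evalw G \<pi> v"
  by (simp add: evalw_def)

lemma evalw_carrier[simp]: "word_in A w \<Longrightarrow> evalw G \<pi> w \<in> carrier G"
proof (induction w)
  case Nil then show ?case by simp
next
  case (Cons x v)
  obtain a b where x: "x = (a,b)" by (cases x)
  have "\<pi> a \<in> carrier G" using Cons.prems piA x by auto
  then show ?case using Cons x by (auto simp: evalw_Cons)
qed

lemma evalw_append: "word_in A w \<Longrightarrow> word_in A v \<Longrightarrow>
   evalw G \<pi> (w @ v) = evalw G \<pi> w \<otimes> evalw G \<pi> v"
proof (induction w)
  case Nil then show ?case by simp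
next
  case (Cons x u)
  obtain a b where x: "x = (a,b)" by (cases x)
  have "\<pi> a \<in> carrier G" using Cons.prems piA x by auto
  then show ?case using Cons x by (auto simp: evalw_Cons m_assoc)
qed

lemma word_in_winv[simp]: "word_in A (winv w) \<longleftrightarrow> word_in A w"
  by (induction w) (auto simp: winv_def)

lemma length_winv[simp]: "length (winv w) = length w"
  by (simp add: winv_def)

lemma evalw_winv: "word_in A w \<Longrightarrow> evalw G \<pi> (winv w) = inv (evalw G \<pi> w)"
proof (induction w)
  case Nil then show ?case by (simp add: winv_def)
next
  case (Cons x u)
  obtain a b where x: "x = (a,b)" by (cases x)
  have pa: "\<pi> a \<in> carrier G" using Cons.prems piA x by auto
  have "winv (x # u) = winv u @ [(a, \<not> b)]" using x by (simp add: winv_def)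
  then have "evalw G \<pi> (winv (x # u)) = inv (evalw G \<pi> u) \<otimes> (if b then inv (\<pi> a) else \<pi> a)"
    using Cons pa x by (simp add: evalw_append evalw_Cons)
  also have "\<dots> = inv (evalw G \<pi> (x # u))"
    using Cons pa x by (simp add: evalw_Cons inv_mult_group)
  finally show ?case .
qed

lemma words_exist:
  assumes gen: "generate G (\<pi> ` A) = carrier G" and x: "x \<in> carrier G"
  shows "\<exists>w. word_in A w \<and> evalw G \<pi> w = x"
proof -
  have "x \<in> generate G (\<pi> ` A)" using gen x by simp
  then show ?thesis
  proof (induction rule: generate.induct)
    case one then show ?case by (intro exI[of _ "[]"]) simp
  next
    case (incl h)
    then obtain a where a: "a \<in> A" "h = \<pi> a" by auto
    then show ?case using piA by (intro exI[of _ "[(a,True)]"]) (auto simp: evalw_Cons)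
  next
    case (inv h)
    then obtain a where a: "a \<in> A" "h = \<pi> a" by auto
    then show ?case using piA by (intro exI[of _ "[(a,False)]"]) (auto simp: evalw_Cons)
  next
    case (eng h1 h2)
    then obtain w1 w2 where "word_in A w1" "evalw G \<pi> w1 = h1" "word_in A w2" "evalw G \<pi> w2 = h2"
      by blast
    then show ?case by (intro exI[of _ "w1 @ w2"]) (simp add: evalw_append)
  qed
qed

lemma wlen_le: "word_in A w \<Longrightarrow> wlen G A \<pi> (evalw G \<pi> w) \<le> length w"
  unfolding wlen_def by (rule Least_le) blast

lemma wlen_word:
  assumes gen: "generate G (\<pi> ` A) = carrier G" and x: "x \<in> carrier G"
  shows "\<exists>w. word_in A w \<and> evalw G \<pi> w = x \<and> length w = wlen G A \<pi> x"
proof -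
  obtain w where "word_in A w \<and> evalw G \<pi> w = x" using words_exist[OF gen x] by blast
  then have "\<exists>n w. length w = n \<and> word_in A w \<and> evalw G \<pi> w = x" by blast
  from LeastI_ex[OF this] show ?thesis unfolding wlen_def by blast
qed

lemma wlen_one[simp]: "wlen G A \<pi> \<one> = 0"
  using wlen_le[of "[]"] by simp

lemma wlen_mult:
  assumes gen: "generate G (\<pi> ` A) = carrier G" and x: "x \<in> carrier G" and y: "y \<in> carrier G"
  shows "wlen G A \<pi> (x \<otimes> y) \<le> wlen G A \<pi> x + wlen G A \<pi> y"
proof -
  obtain w where w: "word_in A w" "evalw G \<pi> w = x" "length w = wlen G A \<pi> x"
    using wlen_word[OF gen x] by blast
  obtain v where v: "word_in A v" "evalw G \<pi> v = y" "length v = wlen G A \<pi> y"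
    using wlen_word[OF gen y] by blast
  have "wlen G A \<pi> (evalw G \<pi> (w @ v)) \<le> length (w @ v)" using w v by (intro wlen_le) simp
  then show ?thesis using w v by (simp add: evalw_append)
qed

lemma wlen_inv_le:
  assumes gen: "generate G (\<pi> ` A) = carrier G" and x: "x \<in> carrier G"
  shows "wlen G A \<pi> (inv x) \<le> wlen G A \<pi> x"
proof -
  obtain w where w: "word_in A w" "evalw G \<pi> w = x" "length w = wlen G A \<pi> x"
    using wlen_word[OF gen x] by blast
  have "wlen G A \<pi> (evalw G \<pi> (winv w)) \<le> length (winv w)" using w by (intro wlen_le) simp
  then show ?thesis using w by (simp add: evalw_winv)
qed

lemma wlen_inv:
  assumes gen: "generate G (\<pi> ` A) = carrier G" and x: "x \<in> carrier G"
  shows "wlen G A \<pi> (inv x) = wlen G A \<pi> x"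
  using wlen_inv_le[OF gen x] wlen_inv_le[OF gen, of "inv x"] x by simp

lemma wdist_sym:
  assumes gen: "generate G (\<pi> ` A) = carrier G" and x: "x \<in> carrier G" and y: "y \<in> carrier G"
  shows "wdist G A \<pi> x y = wdist G A \<pi> y x"
proof -
  have "inv (inv x \<otimes> y) = inv y \<otimes> x" using x y by (simp add: inv_mult_group)
  then show ?thesis unfolding wdist_def using wlen_inv[OF gen, of "inv x \<otimes> y"] x y by simp
qed

lemma wdist_tri:
  assumes gen: "generate G (\<pi> ` A) = carrier G" and x: "x \<in> carrier G" and y: "y \<in> carrier G"
    and z: "z \<in> carrier G"
  shows "wdist G A \<pi> x z \<le> wdist G A \<pi> x y + wdist G A \<pi> y z"
proof -
  have "inv x \<otimes> z = (inv x \<otimes> y) \<otimes> (inv y \<otimes> z)" using x y z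
    by (simp add: m_assoc[symmetric]) (simp add: m_assoc r_inv)
  then show ?thesis unfolding wdist_def using wlen_mult[OF gen, of "inv x \<otimes> y" "inv y \<otimes> z"] x y z
    by simp
qed

lemma wdist_self[simp]: "x \<in> carrier G \<Longrightarrow> wdist G A \<pi> x x = 0"
  by (simp add: wdist_def)

definition cset where
  "cset p q = {d1 + wdist G A \<pi> x y + d2 | x d1 y d2.
      (x, d1) \<in> set (ends G \<pi> p) \<and> (y, d2) \<in> set (ends G \<pi> q)} \<union> same_edge p q"

lemma cdist_cset: "cdist G A \<pi> p q = Min (cset p q)"
  by (simp add: cdist_def cset_def)

lemma same_edge_E: "e \<in> same_edge p q \<Longrightarrow> \<exists>g a s t. p = Ed g a s \<and> q = Ed g a t \<and> e = \<bar>s - t\<bar>"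
  by (cases p; cases q) (auto split: if_splits)

lemma same_edge_sym: "e \<in> same_edge p q \<Longrightarrow> e \<in> same_edge q p"
  by (cases p; cases q) (auto split: if_splits)

lemma finite_same_edge: "finite (same_edge p q)"
  by (cases p; cases q) auto

lemma finite_cset: "finite (cset p q)"
proof -
  have "{d1 + wdist G A \<pi> x y + d2 | x d1 y d2.
      (x, d1) \<in> set (ends G \<pi> p) \<and> (y, d2) \<in> set (ends G \<pi> q)} \<subseteq>
      (\<lambda>((x,d1),(y,d2)). d1 + wdist G A \<pi> x y + d2) ` (set (ends G \<pi> p) \<times> set (ends G \<pi> q))"
    by force
  then show ?thesis unfolding cset_def using finite_same_edge
    by (meson List.finite_set finite_Un finite_SigmaI finite_imageI finite_subset)
qed

lemma ends_ne: "\<exists>x d. (x,d) \<in> set (ends G \<pi> p)"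
  by (cases p) auto

lemma cset_ne: "cset p q \<noteq> {}"
proof -
  obtain x d1 y d2 where "(x,d1) \<in> set (ends G \<pi> p)" "(y,d2) \<in> set (ends G \<pi> q)"
    using ends_ne by blast
  then show ?thesis unfolding cset_def by blast
qed

lemma ends_valid: "valid_pt G A p \<Longrightarrow> (x,d) \<in> set (ends G \<pi> p) \<Longrightarrow> x \<in> carrier G \<and> 0 \<le> d"
  using piA by (cases p) (auto simp: valid_pt_def)

lemma ends_two:
  assumes gen: "generate G (\<pi> ` A) = carrier G"
  shows "valid_pt G A p \<Longrightarrow> (y,d) \<in> set (ends G \<pi> p) \<Longrightarrow> (y',d') \<in> set (ends G \<pi> p) \<Longrightarrow>
    wdist G A \<pi> y y' \<le> d + d'"
proof (cases p)
  case (Vx x)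
  then show "valid_pt G A p \<Longrightarrow> (y,d) \<in> set (ends G \<pi> p) \<Longrightarrow> (y',d') \<in> set (ends G \<pi> p) \<Longrightarrow>
    wdist G A \<pi> y y' \<le> d + d'" by (auto simp: valid_pt_def)
next
  case (Ed g a t)
  assume v: "valid_pt G A p" and e: "(y,d) \<in> set (ends G \<pi> p)" "(y',d') \<in> set (ends G \<pi> p)"
  have g: "g \<in> carrier G" and a: "a \<in> A" and t: "0 < t" "t < 1" using v Ed by (auto simp: valid_pt_def)
  have pa: "\<pi> a \<in> carrier G" using a piA by auto
  have l1: "wlen G A \<pi> (\<pi> a) \<le> 1"
    using wlen_le[of "[(a,True)]"] a pa by (simp add: evalw_Cons)
  have d1: "wdist G A \<pi> g (g \<otimes> \<pi> a) \<le> 1"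
    using l1 g pa by (simp add: wdist_def m_assoc[symmetric])
  have d2: "wdist G A \<pi> (g \<otimes> \<pi> a) g \<le> 1"
    using d1 wdist_sym[OF gen g, of "g \<otimes> \<pi> a"] g pa by simp
  show ?thesis using e Ed d1 d2 g pa t by auto
qed

lemma cset_Vx: "cset (Vx x) (Vx y) = {wdist G A \<pi> x y}"
  by (auto simp: cset_def)

lemma cdist_Vx: "cdist G A \<pi> (Vx x) (Vx y) = wdist G A \<pi> x y"
  by (simp add: cdist_cset cset_Vx)

lemma cset_sym:
  assumes gen: "generate G (\<pi> ` A) = carrier G" and vp: "valid_pt G A p" and vq: "valid_pt G A q"
  shows "e \<in> cset p q \<Longrightarrow> e \<in> cset q p"
proof -
  assume "e \<in> cset p q"
  then consider (E) x d1 y d2 where "e = d1 + wdist G A \<pi> x y + d2" "(x, d1) \<in> set (ends G \<pi> p)"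
      "(y, d2) \<in> set (ends G \<pi> q)" | (S) "e \<in> same_edge p q"
    unfolding cset_def by blast
  then show "e \<in> cset q p"
  proof cases
    case E
    have "x \<in> carrier G" "y \<in> carrier G" using E ends_valid vp vq by blast+
    then have "e = d2 + wdist G A \<pi> y x + d1" using E wdist_sym[OF gen] by simp
    then show ?thesis using E unfolding cset_def by blast
  next
    case S then show ?thesis unfolding cset_def using same_edge_sym by blast
  qed
qed

lemma cdist_sym:
  assumes gen: "generate G (\<pi> ` A) = carrier G" and vp: "valid_pt G A p" and vq: "valid_pt G A q"
  shows "cdist G A \<pi> p q = cdist G A \<pi> q p"
proof -
  have "cset p q = cset q p" using cset_sym[OF gen vp vq] cset_sym[OF gen vq vp] by blast
  then show ?thesis by (simp add: cdist_cset)
qed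

lemma same_edge_ends_l:
  "e \<in> same_edge p q \<Longrightarrow> (y,d) \<in> set (ends G \<pi> q) \<Longrightarrow> \<exists>d'. (y,d') \<in> set (ends G \<pi> p) \<and> d' \<le> e + d"
  apply (drule same_edge_E)
  apply (elim exE conjE)
  apply (auto simp: abs_if)
  done

lemma same_edge_ends_r:
  "e \<in> same_edge q r \<Longrightarrow> (y,d) \<in> set (ends G \<pi> q) \<Longrightarrow> \<exists>d'. (y,d') \<in> set (ends G \<pi> r) \<and> d' \<le> d + e"
  apply (drule same_edge_E)
  apply (elim exE conjE)
  apply (auto simp: abs_if)
  done

lemma cset_tri:
  assumes gen: "generate G (\<pi> ` A) = carrier G" and vp: "valid_pt G A p" and vq: "valid_pt G A q"
    and vr: "valid_pt G A r"
  and e1: "e1 \<in> cset p q" and e2: "e2 \<in> cset q r"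
  shows "\<exists>e \<in> cset p r. e \<le> e1 + e2"
proof -
  from e1 consider (E) x d1 y d2 where "e1 = d1 + wdist G A \<pi> x y + d2" "(x, d1) \<in> set (ends G \<pi> p)"
      "(y, d2) \<in> set (ends G \<pi> q)" | (S) "e1 \<in> same_edge p q"
    unfolding cset_def by blast
  note c1 = this
  from e2 consider (E) y' d2' z d3 where "e2 = d2' + wdist G A \<pi> y' z + d3" "(y', d2') \<in> set (ends G \<pi> q)"
      "(z, d3) \<in> set (ends G \<pi> r)" | (S) "e2 \<in> same_edge q r"
    unfolding cset_def by blast
  note c2 = this
  show ?thesis
  proof (cases rule: c1)
    case E1: E
    show ?thesis
    proof (cases rule: c2)
      case E2: E
      have cx: "x \<in> carrier G" "y \<in> carrier G" "y' \<in> carrier G" "z \<in> carrier G"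
        using E1 E2 ends_valid vp vq vr by blast+
      have "wdist G A \<pi> y y' \<le> d2 + d2'" using ends_two[OF gen vq] E1 E2 by blast
      moreover have "wdist G A \<pi> x z \<le> wdist G A \<pi> x y + wdist G A \<pi> y y' + wdist G A \<pi> y' z"
        using wdist_tri[OF gen cx(1,2,4)] wdist_tri[OF gen cx(2,3,4)] by linarith
      moreover have "d1 + wdist G A \<pi> x z + d3 \<in> cset p r" using E1 E2 unfolding cset_def by blast
      ultimately show ?thesis using E1 E2 by (intro bexI[of _ "d1 + wdist G A \<pi> x z + d3"]) auto
    next
      case S2: S
      obtain d3 where d3: "(y,d3) \<in> set (ends G \<pi> r)" "d3 \<le> d2 + e2"
        using same_edge_ends_r[OF S2 E1(3)] by blast
      have "d1 + wdist G A \<pi> x y + d3 \<in> cset p r" using E1 d3 unfolding cset_def by blast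
      then show ?thesis using E1 d3 by (intro bexI[of _ "d1 + wdist G A \<pi> x y + d3"]) auto
    qed
  next
    case S1: S
    show ?thesis
    proof (cases rule: c2)
      case E2: E
      obtain d1 where d1: "(y',d1) \<in> set (ends G \<pi> p)" "d1 \<le> e1 + d2'"
        using same_edge_ends_l[OF S1 E2(2)] by blast
      have "d1 + wdist G A \<pi> y' z + d3 \<in> cset p r" using E2 d1 unfolding cset_def by blast
      then show ?thesis using E2 d1 by (intro bexI[of _ "d1 + wdist G A \<pi> y' z + d3"]) auto
    next
      case S2: S
      obtain g a s t where pq: "p = Ed g a s" "q = Ed g a t" "e1 = \<bar>s - t\<bar>" using same_edge_E[OF S1] by blast
      obtain g' a' t' u where qr: "q = Ed g' a' t'" "r = Ed g' a' u" "e2 = \<bar>t' - u\<bar>" using same_edge_E[OF S2] by blast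
      have "\<bar>s - u\<bar> \<in> cset p r" using pq qr unfolding cset_def by auto
      then show ?thesis using pq qr by (intro bexI[of _ "\<bar>s - u\<bar>"]) auto
    qed
  qed
qed

lemma cdist_tri:
  assumes gen: "generate G (\<pi> ` A) = carrier G" and vp: "valid_pt G A p" and vq: "valid_pt G A q"
    and vr: "valid_pt G A r"
  shows "cdist G A \<pi> p r \<le> cdist G A \<pi> p q + cdist G A \<pi> q r"
proof -
  have "cdist G A \<pi> p q \<in> cset p q" "cdist G A \<pi> q r \<in> cset q r"
    unfolding cdist_cset using finite_cset cset_ne by (auto intro: Min_in)
  then obtain e where "e \<in> cset p r" "e \<le> cdist G A \<pi> p q + cdist G A \<pi> q r"
    using cset_tri[OF gen vp vq vr] by blast
  moreover have "cdist G A \<pi> p r \<le> e" unfolding cdist_cset using finite_cset \<open>e \<in> cset p r\<close>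
    by (auto intro: Min_le)
  ultimately show ?thesis by linarith
qed

lemma ydist_le: "word_in A v \<Longrightarrow> H #> (x \<otimes> evalw G \<pi> v) = H #> y \<Longrightarrow> ydist G A \<pi> H x y \<le> length v"
  unfolding ydist_def by (rule Least_le) blast

lemma ydist_word: "word_in A v \<Longrightarrow> H #> (x \<otimes> evalw G \<pi> v) = H #> y \<Longrightarrow>
  \<exists>v'. word_in A v' \<and> length v' = ydist G A \<pi> H x y \<and> H #> (x \<otimes> evalw G \<pi> v') = H #> y"
proof -
  assume "word_in A v" "H #> (x \<otimes> evalw G \<pi> v) = H #> y"
  then have "\<exists>n v. length v = n \<and> word_in A v \<and> H #> (x \<otimes> evalw G \<pi> v) = H #> y" by blast
  from LeastI_ex[OF this] show ?thesis unfolding ydist_def by blast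
qed

lemma near_len:
  assumes sub: "subgroup H G" and g: "g \<in> carrier G" and ng: "near_geod_from_to G A \<pi> H g f w"
  shows "length w \<le> ydist G A \<pi> H g f + 4"
proof -
  have HG: "H \<subseteq> carrier G" using sub subgroup.subset by blast
  have wA: "word_in A w" and cw: "H #> (g \<otimes> evalw G \<pi> w) = H #> f" using ng
    unfolding near_geod_from_to_def by auto
  obtain w1 w' w2 where w: "w = w1 @ w' @ w2" "length w1 \<le> 1" "length w2 \<le> 1"
    and yg: "ygeod G A \<pi> H (g \<otimes> evalw G \<pi> w1) w'"
    using ng unfolding near_geod_from_to_def near_geod_def by blast
  have A1: "word_in A w1" "word_in A w'" "word_in A w2" using wA w by auto
  define x1 where "x1 = g \<otimes> evalw G \<pi> w1"
  have x1: "x1 \<in> carrier G" using g A1 unfolding x1_def by simp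
  have lw': "length w' = ydist G A \<pi> H x1 (x1 \<otimes> evalw G \<pi> w')"
    using yg unfolding ygeod_def x1_def by blast
  obtain v where v: "word_in A v" "length v = ydist G A \<pi> H g f" "H #> (g \<otimes> evalw G \<pi> v) = H #> f"
    using ydist_word[OF wA cw] by blast
  define z where "z = winv w1 @ v @ winv w2"
  have zA: "word_in A z" using A1 v unfolding z_def by simp
  note c = evalw_carrier[OF A1(1)] evalw_carrier[OF A1(2)] evalw_carrier[OF A1(3)] evalw_carrier[OF v(1)]
  have ez: "x1 \<otimes> evalw G \<pi> z = (g \<otimes> evalw G \<pi> v) \<otimes> inv (evalw G \<pi> w2)"
    unfolding z_def x1_def using A1 v c g
    by (simp add: evalw_append evalw_winv m_assoc[symmetric]) (simp add: m_assoc)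
  have ew: "(g \<otimes> evalw G \<pi> w) \<otimes> inv (evalw G \<pi> w2) = x1 \<otimes> evalw G \<pi> w'"
    unfolding w(1) x1_def using A1 c g
    by (simp add: evalw_append m_assoc)
  have "H #> (x1 \<otimes> evalw G \<pi> z) = (H #> (g \<otimes> evalw G \<pi> v)) #> inv (evalw G \<pi> w2)"
    using ez coset_mult_assoc[OF HG] c g by simp
  also have "\<dots> = (H #> (g \<otimes> evalw G \<pi> w)) #> inv (evalw G \<pi> w2)" using v(3) cw by simp
  also have "\<dots> = H #> (x1 \<otimes> evalw G \<pi> w')"
    using ew coset_mult_assoc[OF HG] c g wA by simp
  finally have "ydist G A \<pi> H x1 (x1 \<otimes> evalw G \<pi> w') \<le> length z" using ydist_le[OF zA] by blast
  then show ?thesis using lw' w v unfolding z_def by simp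
qed

end

lemma geo_lemma:
  fixes d :: "'p \<Rightarrow> 'p \<Rightarrow> real" and \<sigma> \<alpha> \<beta> :: "real \<Rightarrow> 'p"
  assumes tri: "\<And>x y z. V x \<Longrightarrow> V y \<Longrightarrow> V z \<Longrightarrow> d x z \<le> d x y + d y z"
    and sym: "\<And>x y. V x \<Longrightarrow> V y \<Longrightarrow> d x y = d y x"
    and Vs: "\<And>t. t \<in> {0..T} \<Longrightarrow> V (\<sigma> t)"
    and ds: "\<And>s t. s \<in> {0..T} \<Longrightarrow> t \<in> {0..T} \<Longrightarrow> d (\<sigma> s) (\<sigma> t) = \<bar>s - t\<bar>"
    and Va: "\<And>t. t \<in> {0..La} \<Longrightarrow> V (\<alpha> t)"
    and da: "\<And>s t. s \<in> {0..La} \<Longrightarrow> t \<in> {0..La} \<Longrightarrow> d (\<alpha> s) (\<alpha> t) = \<bar>s - t\<bar>"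
    and Vb: "\<And>t. t \<in> {0..Lb} \<Longrightarrow> V (\<beta> t)"
    and db: "\<And>s t. s \<in> {0..Lb} \<Longrightarrow> t \<in> {0..Lb} \<Longrightarrow> d (\<beta> s) (\<beta> t) = \<bar>s - t\<bar>"
    and e1: "\<sigma> 0 = \<alpha> 0" and e2: "\<sigma> T = \<beta> 0" and e3: "\<alpha> La = \<beta> Lb"
    and T0: "T \<ge> 0" and La0: "La \<ge> 0" and Lb0: "Lb \<ge> 0" and dl: "dl \<ge> 0"
    and tr1: "\<And>\<tau>. 0 \<le> \<tau> \<Longrightarrow> \<tau> \<le> (T + La - Lb)/2 \<Longrightarrow> d (\<sigma> \<tau>) (\<alpha> \<tau>) \<le> dl"
    and tr2: "\<And>\<tau>. 0 \<le> \<tau> \<Longrightarrow> \<tau> \<le> (T + Lb - La)/2 \<Longrightarrow> d (\<sigma> (T - \<tau>)) (\<beta> \<tau>) \<le> dl"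
    and tr3: "\<And>\<tau>. 0 \<le> \<tau> \<Longrightarrow> \<tau> \<le> (La + Lb - T)/2 \<Longrightarrow> d (\<alpha> (La - \<tau>)) (\<beta> (Lb - \<tau>)) \<le> dl"
  shows "(t \<in> {0..T} \<Longrightarrow> s \<in> {0..La} \<Longrightarrow> d (\<sigma> t) (\<alpha> s) \<le> dl \<Longrightarrow> t \<le> (T + La - Lb)/2 + 3 * dl)"
    and "(t \<in> {0..T} \<Longrightarrow> s \<in> {0..Lb} \<Longrightarrow> d (\<sigma> t) (\<beta> s) \<le> dl \<Longrightarrow> t \<ge> (T + La - Lb)/2 - 3 * dl)"
proof -
  have T: "T = d (\<sigma> 0) (\<sigma> T)" using ds[of 0 T] T0 by simp
  have La: "La = d (\<alpha> 0) (\<alpha> La)" using da[of 0 La] La0 by simp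
  have Lb: "Lb = d (\<beta> 0) (\<beta> Lb)" using db[of 0 Lb] Lb0 by simp
  have V0: "V (\<sigma> 0)" "V (\<sigma> T)" "V (\<alpha> La)" using Vs Va T0 La0 by auto
  have i1: "T \<le> La + Lb"
    using tri[OF V0(1) V0(3) V0(2)] sym[OF V0(3) V0(2)] T La Lb e1 e2 e3 by simp
  have i2: "La \<le> T + Lb"
    using tri[OF V0(1) V0(2) V0(3)] T La Lb e1 e2 e3 by simp
  have i3: "Lb \<le> T + La"
    using tri[OF V0(2) V0(1) V0(3)] sym[OF V0(2) V0(1)] T La Lb e1 e2 e3 by simp
  define P where "P = (T + La - Lb)/2"
  define Q where "Q = (T + Lb - La)/2"
  have P2: "2 * P = T + La - Lb" and Q2: "2 * Q = T + Lb - La" unfolding P_def Q_def by simp_all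
  have tr1': "\<And>\<tau>. 0 \<le> \<tau> \<Longrightarrow> \<tau> \<le> P \<Longrightarrow> d (\<sigma> \<tau>) (\<alpha> \<tau>) \<le> dl"
    using tr1 unfolding P_def by blast
  have tr2': "\<And>\<tau>. 0 \<le> \<tau> \<Longrightarrow> \<tau> \<le> Q \<Longrightarrow> d (\<sigma> (T - \<tau>)) (\<beta> \<tau>) \<le> dl"
    using tr2 unfolding Q_def by blast
  have tr3': "\<And>\<tau>. 0 \<le> \<tau> \<Longrightarrow> 2 * \<tau> \<le> La + Lb - T \<Longrightarrow> d (\<alpha> (La - \<tau>)) (\<beta> (Lb - \<tau>)) \<le> dl"
    using tr3 by (simp add: field_simps)
  have A1: "t \<le> P + 3 * dl" if t: "t \<in> {0..T}" and s: "s \<in> {0..La}" and h: "d (\<sigma> t) (\<alpha> s) \<le> dl" for t s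

    proof (rule ccontr)
      assume c: "\<not> ?thesis"
      show False
      proof (cases "s \<le> P")
        case True
        have s': "s \<in> {0..T}" using s True i2 using P2 Q2 by auto
        have "d (\<sigma> s) (\<alpha> s) \<le> dl" using tr1' True s using P2 Q2 by auto
        moreover have "d (\<sigma> t) (\<sigma> s) \<le> d (\<sigma> t) (\<alpha> s) + d (\<alpha> s) (\<sigma> s)"
          using tri Vs Va t s s' by blast
        moreover have "d (\<alpha> s) (\<sigma> s) = d (\<sigma> s) (\<alpha> s)" using sym Vs Va s s' by blast
        ultimately have "\<bar>t - s\<bar> \<le> 2 * dl" using ds[OF t s'] h by linarith
        then show False using c True unfolding abs_le_iff using P2 Q2 by linarith
      next
        case False
        define u where "u = Lb - (La - s)"
        have u: "u \<in> {0..Lb}" using s False i1 i2 i3 unfolding u_def using P2 Q2 by auto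
        have "d (\<alpha> s) (\<beta> u) \<le> dl" using tr3'[of "La - s"] s False unfolding u_def using P2 Q2 by auto
        have tT: "T - t \<in> {0..Lb}" using t c i1 dl P2 by auto
        have "d (\<sigma> t) (\<beta> (T - t)) \<le> dl" using tr2'[of "T - t"] t c P2 Q2 dl by auto
        have "d (\<beta> u) (\<beta> (T - t)) \<le> d (\<beta> u) (\<alpha> s) + d (\<alpha> s) (\<beta> (T - t))"
          using tri Vb Va u tT s by blast
        moreover have "d (\<alpha> s) (\<beta> (T - t)) \<le> d (\<alpha> s) (\<sigma> t) + d (\<sigma> t) (\<beta> (T - t))"
          using tri Vb Va Vs t tT s by blast
        moreover have "d (\<beta> u) (\<alpha> s) = d (\<alpha> s) (\<beta> u)" using sym Vb Va u s by blast
        moreover have "d (\<alpha> s) (\<sigma> t) = d (\<sigma> t) (\<alpha> s)" using sym Vs Va t s by blast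
        ultimately have "\<bar>u - (T - t)\<bar> \<le> 3 * dl"
          using db[OF u tT] h \<open>d (\<alpha> s) (\<beta> u) \<le> dl\<close> \<open>d (\<sigma> t) (\<beta> (T - t)) \<le> dl\<close> by linarith
        then show False using c False unfolding u_def unfolding abs_le_iff using P2 Q2 by linarith
      qed
    qed
  have B1: "t \<ge> P - 3 * dl" if t: "t \<in> {0..T}" and s: "s \<in> {0..Lb}" and h: "d (\<sigma> t) (\<beta> s) \<le> dl" for t s

    proof (rule ccontr)
      assume c: "\<not> ?thesis"
      show False
      proof (cases "s \<le> Q")
        case True
        have s': "T - s \<in> {0..T}" using s True i3 using P2 Q2 by auto
        have "d (\<sigma> (T - s)) (\<beta> s) \<le> dl" using tr2' True s using P2 Q2 by auto
        moreover have "d (\<sigma> t) (\<sigma> (T - s)) \<le> d (\<sigma> t) (\<beta> s) + d (\<beta> s) (\<sigma> (T - s))"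
          using tri Vs Vb t s s' by blast
        moreover have "d (\<beta> s) (\<sigma> (T - s)) = d (\<sigma> (T - s)) (\<beta> s)" using sym Vs Vb s s' by blast
        ultimately have "\<bar>t - (T - s)\<bar> \<le> 2 * dl" using ds[OF t s'] h by linarith
        then show False using c True dl unfolding abs_le_iff using P2 Q2 by linarith
      next
        case False
        define v where "v = La - (Lb - s)"
        have v: "v \<in> {0..La}" using s False i1 i2 i3 unfolding v_def using P2 Q2 by auto
        have "d (\<alpha> v) (\<beta> s) \<le> dl" using tr3'[of "Lb - s"] s False unfolding v_def using P2 Q2 by auto
        have tA: "t \<in> {0..La}" using t c i1 P2 dl by auto
        have "d (\<sigma> t) (\<alpha> t) \<le> dl" using tr1'[of t] t c using P2 Q2 dl by auto
        have "d (\<alpha> v) (\<alpha> t) \<le> d (\<alpha> v) (\<beta> s) + d (\<beta> s) (\<alpha> t)"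
          using tri Vb Va v tA s by blast
        moreover have "d (\<beta> s) (\<alpha> t) \<le> d (\<beta> s) (\<sigma> t) + d (\<sigma> t) (\<alpha> t)"
          using tri Vb Va Vs t tA s by blast
        moreover have "d (\<beta> s) (\<sigma> t) = d (\<sigma> t) (\<beta> s)" using sym Vs Vb t s by blast
        ultimately have "\<bar>v - t\<bar> \<le> 3 * dl"
          using da[OF v tA] h \<open>d (\<alpha> v) (\<beta> s) \<le> dl\<close> \<open>d (\<sigma> t) (\<alpha> t) \<le> dl\<close> by linarith
        then show False using c False dl unfolding v_def unfolding abs_le_iff using P2 Q2 by linarith
      qed
    qed
  show "(t \<in> {0..T} \<Longrightarrow> s \<in> {0..La} \<Longrightarrow> d (\<sigma> t) (\<alpha> s) \<le> dl \<Longrightarrow> t \<le> (T + La - Lb)/2 + 3 * dl)"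
    using A1 P_def by blast
  show "(t \<in> {0..T} \<Longrightarrow> s \<in> {0..Lb} \<Longrightarrow> d (\<sigma> t) (\<beta> s) \<le> dl \<Longrightarrow> t \<ge> (T + La - Lb)/2 - 3 * dl)"
    using B1 P_def by blast
qed


theorem lemma4p2:
  fixes G :: "('g, 'b) monoid_scheme" and A :: "'a set" and \<pi> :: "'a \<Rightarrow> 'g"
    and H :: "'g set" and \<delta> :: int and E :: real and K1 :: int
  assumes grp: "group G"
    and finA: "finite A"
    and piA: "\<pi> ` A \<subseteq> carrier G"
    and gen: "generate G (\<pi> ` A) = carrier G"
    and delta: "\<delta> \<ge> 10"
    and trim: "all_trim G A \<pi> (real_of_int \<delta>)"
    and sub: "subgroup H G"
    and qc: "quasiconvex G A \<pi> H E"
    and K1pos: "K1 > 0"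
    and key: "\<And>g f w h. shortest_in_coset G A \<pi> H g \<Longrightarrow> shortest_in_coset G A \<pi> H f \<Longrightarrow>
                near_geod_from_to G A \<pi> H g f w \<Longrightarrow> h \<in> H \<Longrightarrow>
                h \<otimes>\<^bsub>G\<^esub> f = g \<otimes>\<^bsub>G\<^esub> evalw G \<pi> w \<Longrightarrow> int (wlen G A \<pi> h) \<le> K1"
  shows "\<exists>K2 > 0. \<forall>g f w u h1 h2 \<gamma>1 L1 \<gamma>2 L2 \<sigma> L\<sigma> \<alpha> L\<alpha> \<beta> L\<beta> a b.
     shortest_in_coset G A \<pi> H g \<and> shortest_in_coset G A \<pi> H f \<and>
     near_geod_from_to G A \<pi> H g f w \<and> near_geod_from_to G A \<pi> H g f u \<and>
     h1 \<in> H \<and> h2 \<in> H \<and>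
     h1 \<otimes>\<^bsub>G\<^esub> g \<otimes>\<^bsub>G\<^esub> evalw G \<pi> w = f \<and> h2 \<otimes>\<^bsub>G\<^esub> g \<otimes>\<^bsub>G\<^esub> evalw G \<pi> u = f \<and>
     geod G A \<pi> \<gamma>1 L1 (Vx \<one>\<^bsub>G\<^esub>) (Vx g) \<and>
     geod G A \<pi> \<gamma>2 L2 (Vx \<one>\<^bsub>G\<^esub>) (Vx ((inv\<^bsub>G\<^esub> h1 \<otimes>\<^bsub>G\<^esub> h2) \<otimes>\<^bsub>G\<^esub> g)) \<and>
     geod G A \<pi> \<sigma> L\<sigma> (Vx g) (Vx ((inv\<^bsub>G\<^esub> h1 \<otimes>\<^bsub>G\<^esub> h2) \<otimes>\<^bsub>G\<^esub> g)) \<and>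
     geod G A \<pi> \<alpha> L\<alpha> (Vx g) (Vx (g \<otimes>\<^bsub>G\<^esub> evalw G \<pi> w)) \<and>
     geod G A \<pi> \<beta> L\<beta> (Vx ((inv\<^bsub>G\<^esub> h1 \<otimes>\<^bsub>G\<^esub> h2) \<otimes>\<^bsub>G\<^esub> g)) (Vx (g \<otimes>\<^bsub>G\<^esub> evalw G \<pi> w)) \<and>
     0 \<le> a \<and> a \<le> b \<and> b \<le> L\<sigma> \<and>
     (a + b) / 2 = gprod G A \<pi> ((inv\<^bsub>G\<^esub> h1 \<otimes>\<^bsub>G\<^esub> h2) \<otimes>\<^bsub>G\<^esub> g) \<one>\<^bsub>G\<^esub> g \<and>
     ((\<forall>t \<in> {a..b}. \<exists>s \<in> {0..L\<alpha>}. cdist G A \<pi> (\<sigma> t) (\<alpha> s) \<le> real_of_int \<delta>) \<or>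
      (\<forall>t \<in> {a..b}. \<exists>s \<in> {0..L\<beta>}. cdist G A \<pi> (\<sigma> t) (\<beta> s) \<le> real_of_int \<delta>))
     \<longrightarrow> b - a \<le> K2"

proof -
  interpret group G by (rule grp)
  have HG: "H \<subseteq> carrier G" using sub subgroup.subset by blast
  define K2 :: real where "K2 = 4 + 2 * real_of_int K1 + 6 * real_of_int \<delta>"
  have K2pos: "K2 > 0" unfolding K2_def using K1pos delta by simp
  show ?thesis
  proof (intro exI[of _ K2] conjI allI impI K2pos)
    fix g f w u h1 h2 \<gamma>1 L1 \<gamma>2 L2 \<sigma> L\<sigma> \<alpha> L\<alpha> \<beta> L\<beta> a b
    assume hyp: "shortest_in_coset G A \<pi> H g \<and> shortest_in_coset G A \<pi> H f \<and>
     near_geod_from_to G A \<pi> H g f w \<and> near_geod_from_to G A \<pi> H g f u \<and>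
     h1 \<in> H \<and> h2 \<in> H \<and>
     h1 \<otimes>\<^bsub>G\<^esub> g \<otimes>\<^bsub>G\<^esub> evalw G \<pi> w = f \<and> h2 \<otimes>\<^bsub>G\<^esub> g \<otimes>\<^bsub>G\<^esub> evalw G \<pi> u = f \<and>
     geod G A \<pi> \<gamma>1 L1 (Vx \<one>\<^bsub>G\<^esub>) (Vx g) \<and>
     geod G A \<pi> \<gamma>2 L2 (Vx \<one>\<^bsub>G\<^esub>) (Vx ((inv\<^bsub>G\<^esub> h1 \<otimes>\<^bsub>G\<^esub> h2) \<otimes>\<^bsub>G\<^esub> g)) \<and>
     geod G A \<pi> \<sigma> L\<sigma> (Vx g) (Vx ((inv\<^bsub>G\<^esub> h1 \<otimes>\<^bsub>G\<^esub> h2) \<otimes>\<^bsub>G\<^esub> g)) \<and>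
     geod G A \<pi> \<alpha> L\<alpha> (Vx g) (Vx (g \<otimes>\<^bsub>G\<^esub> evalw G \<pi> w)) \<and>
     geod G A \<pi> \<beta> L\<beta> (Vx ((inv\<^bsub>G\<^esub> h1 \<otimes>\<^bsub>G\<^esub> h2) \<otimes>\<^bsub>G\<^esub> g)) (Vx (g \<otimes>\<^bsub>G\<^esub> evalw G \<pi> w)) \<and>
     0 \<le> a \<and> a \<le> b \<and> b \<le> L\<sigma> \<and>
     (a + b) / 2 = gprod G A \<pi> ((inv\<^bsub>G\<^esub> h1 \<otimes>\<^bsub>G\<^esub> h2) \<otimes>\<^bsub>G\<^esub> g) \<one>\<^bsub>G\<^esub> g \<and>
     ((\<forall>t \<in> {a..b}. \<exists>s \<in> {0..L\<alpha>}. cdist G A \<pi> (\<sigma> t) (\<alpha> s) \<le> real_of_int \<delta>) \<or>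
      (\<forall>t \<in> {a..b}. \<exists>s \<in> {0..L\<beta>}. cdist G A \<pi> (\<sigma> t) (\<beta> s) \<le> real_of_int \<delta>))"
    define hg where "hg = (inv\<^bsub>G\<^esub> h1 \<otimes>\<^bsub>G\<^esub> h2) \<otimes>\<^bsub>G\<^esub> g"
    define f' where "f' = g \<otimes>\<^bsub>G\<^esub> evalw G \<pi> w"
    have sg: "shortest_in_coset G A \<pi> H g" and sf: "shortest_in_coset G A \<pi> H f"
      and nw: "near_geod_from_to G A \<pi> H g f w" and nu: "near_geod_from_to G A \<pi> H g f u"
      and h1H: "h1 \<in> H" and h2H: "h2 \<in> H"
      and eq1: "h1 \<otimes>\<^bsub>G\<^esub> g \<otimes>\<^bsub>G\<^esub> evalw G \<pi> w = f" and eq2: "h2 \<otimes>\<^bsub>G\<^esub> g \<otimes>\<^bsub>G\<^esub> evalw G \<pi> u = f"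
      and gs: "geod G A \<pi> \<sigma> L\<sigma> (Vx g) (Vx hg)"
      and ga: "geod G A \<pi> \<alpha> L\<alpha> (Vx g) (Vx f')"
      and gb: "geod G A \<pi> \<beta> L\<beta> (Vx hg) (Vx f')"
      and ab: "0 \<le> a" "a \<le> b" "b \<le> L\<sigma>"
      and mid: "(a + b) / 2 = gprod G A \<pi> hg \<one>\<^bsub>G\<^esub> g"
      and near: "(\<forall>t \<in> {a..b}. \<exists>s \<in> {0..L\<alpha>}. cdist G A \<pi> (\<sigma> t) (\<alpha> s) \<le> real_of_int \<delta>) \<or>
      (\<forall>t \<in> {a..b}. \<exists>s \<in> {0..L\<beta>}. cdist G A \<pi> (\<sigma> t) (\<beta> s) \<le> real_of_int \<delta>)"
      using hyp unfolding hg_def f'_def by blast+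
    have gc: "g \<in> carrier G" using sg unfolding shortest_in_coset_def by blast
    have fc: "f \<in> carrier G" using sf unfolding shortest_in_coset_def by blast
    have h1c: "h1 \<in> carrier G" and h2c: "h2 \<in> carrier G" using h1H h2H HG by auto
    have wA: "word_in A w" and uA: "word_in A u" using nw nu unfolding near_geod_from_to_def by auto
    have wc: "evalw G \<pi> w \<in> carrier G" and uc: "evalw G \<pi> u \<in> carrier G"
      using evalw_carrier[OF grp piA] wA uA by auto
    define h where "h = inv\<^bsub>G\<^esub> h1 \<otimes>\<^bsub>G\<^esub> h2"
    have hH: "h \<in> H" unfolding h_def using sub h1H h2H by (simp add: subgroup.m_closed subgroup.m_inv_closed)
    have hc: "h \<in> carrier G" using hH HG by auto
    have hgc: "hg \<in> carrier G" unfolding hg_def using h1c h2c gc by simp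
    have f'c: "f' \<in> carrier G" unfolding f'_def using gc wc by simp
    have key1: "inv\<^bsub>G\<^esub> h1 \<otimes>\<^bsub>G\<^esub> f = g \<otimes>\<^bsub>G\<^esub> evalw G \<pi> w" using eq1[symmetric] h1c gc wc
      by (simp add: m_assoc[symmetric])
    have key2: "inv\<^bsub>G\<^esub> h2 \<otimes>\<^bsub>G\<^esub> f = g \<otimes>\<^bsub>G\<^esub> evalw G \<pi> u" using eq2[symmetric] h2c gc uc
      by (simp add: m_assoc[symmetric])
    have K1a: "int (wlen G A \<pi> (inv\<^bsub>G\<^esub> h1)) \<le> K1"
      using key[OF sg sf nw _ key1] sub h1H by (simp add: subgroup.m_inv_closed)
    have K1b: "int (wlen G A \<pi> (inv\<^bsub>G\<^esub> h2)) \<le> K1"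
      using key[OF sg sf nu _ key2] sub h2H by (simp add: subgroup.m_inv_closed)
    have hgu: "hg \<otimes>\<^bsub>G\<^esub> evalw G \<pi> u = f'"
    proof -
      have "hg \<otimes>\<^bsub>G\<^esub> evalw G \<pi> u = inv\<^bsub>G\<^esub> h1 \<otimes>\<^bsub>G\<^esub> (h2 \<otimes>\<^bsub>G\<^esub> g \<otimes>\<^bsub>G\<^esub> evalw G \<pi> u)"
        unfolding hg_def using h1c h2c gc uc by (simp add: m_assoc)
      also have "\<dots> = inv\<^bsub>G\<^esub> h1 \<otimes>\<^bsub>G\<^esub> f" using eq2 by simp
      finally show ?thesis using key1 unfolding f'_def by simp
    qed
    have geodE: "\<And>\<gamma> L p q. geod G A \<pi> \<gamma> L p q \<Longrightarrow> L = cdist G A \<pi> p q"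
      unfolding geod_def by (metis atLeastAtMost_iff abs_0_eq abs_minus_commute diff_0 abs_minus_cancel order_refl abs_of_nonneg)
    have LS: "L\<sigma> = wdist G A \<pi> g hg" using geodE[OF gs] cdist_Vx[OF grp piA] by simp
    have LA: "L\<alpha> = real (wlen G A \<pi> (evalw G \<pi> w))"
      using geodE[OF ga] cdist_Vx[OF grp piA] gc wc unfolding wdist_def f'_def by (simp add: m_assoc[symmetric])
    have LB: "L\<beta> = real (wlen G A \<pi> (evalw G \<pi> u))"
    proof -
      have "inv\<^bsub>G\<^esub> hg \<otimes>\<^bsub>G\<^esub> f' = evalw G \<pi> u" using hgu[symmetric] hgc uc f'c
        by (simp add: inv_solve_left')
      then show ?thesis using geodE[OF gb] cdist_Vx[OF grp piA] unfolding wdist_def by simp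
    qed
    have D1: "ydist G A \<pi> H g f \<le> wlen G A \<pi> (evalw G \<pi> w)"
    proof -
      obtain v where v: "word_in A v" "evalw G \<pi> v = evalw G \<pi> w" "length v = wlen G A \<pi> (evalw G \<pi> w)"
        using wlen_word[OF grp piA gen wc] by blast
      have "H #>\<^bsub>G\<^esub> (g \<otimes>\<^bsub>G\<^esub> evalw G \<pi> v) = H #>\<^bsub>G\<^esub> f" using v nw unfolding near_geod_from_to_def by simp
      then show ?thesis using ydist_le[OF grp piA v(1)] v by simp
    qed
    have D2: "ydist G A \<pi> H g f \<le> wlen G A \<pi> (evalw G \<pi> u)"
    proof -
      obtain v where v: "word_in A v" "evalw G \<pi> v = evalw G \<pi> u" "length v = wlen G A \<pi> (evalw G \<pi> u)"
        using wlen_word[OF grp piA gen uc] by blast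
      have "H #>\<^bsub>G\<^esub> (g \<otimes>\<^bsub>G\<^esub> evalw G \<pi> v) = H #>\<^bsub>G\<^esub> f" using v nu unfolding near_geod_from_to_def by simp
      then show ?thesis using ydist_le[OF grp piA v(1)] v by simp
    qed
    have N1: "length w \<le> ydist G A \<pi> H g f + 4" using near_len[OF grp piA sub gc nw] .
    have N2: "length u \<le> ydist G A \<pi> H g f + 4" using near_len[OF grp piA sub gc nu] .
    have W1: "wlen G A \<pi> (evalw G \<pi> w) \<le> length w" using wlen_le[OF grp piA wA] .
    have W2: "wlen G A \<pi> (evalw G \<pi> u) \<le> length u" using wlen_le[OF grp piA uA] .
    have LAB1: "L\<alpha> - L\<beta> \<le> 4" using LA LB D1 D2 N1 N2 W1 W2 by linarith
    have LAB2: "L\<beta> - L\<alpha> \<le> 4" using LA LB D1 D2 N1 N2 W1 W2 by linarith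
    have hgco: "hg \<in> H #>\<^bsub>G\<^esub> g" unfolding hg_def r_coset_def using hH h_def by auto
    have S1: "wlen G A \<pi> g \<le> wlen G A \<pi> hg" using sg hgco unfolding shortest_in_coset_def by blast
    have "wlen G A \<pi> hg \<le> wlen G A \<pi> h + wlen G A \<pi> g"
      unfolding hg_def h_def[symmetric] using wlen_mult[OF grp piA gen hc gc] .
    moreover have "wlen G A \<pi> h \<le> wlen G A \<pi> (inv\<^bsub>G\<^esub> h1) + wlen G A \<pi> h2"
      unfolding h_def using wlen_mult[OF grp piA gen _ h2c] h1c by simp
    moreover have "wlen G A \<pi> h2 = wlen G A \<pi> (inv\<^bsub>G\<^esub> h2)" using wlen_inv[OF grp piA gen h2c] by simp
    ultimately have S2: "int (wlen G A \<pi> hg) \<le> int (wlen G A \<pi> g) + 2 * K1" using K1a K1b by linarith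
    have GP: "a + b = L\<sigma> + real (wlen G A \<pi> g) - real (wlen G A \<pi> hg)"
    proof -
      have "wdist G A \<pi> g \<one>\<^bsub>G\<^esub> = wlen G A \<pi> g" unfolding wdist_def using wlen_inv[OF grp piA gen gc] gc by simp
      moreover have "wdist G A \<pi> hg \<one>\<^bsub>G\<^esub> = wlen G A \<pi> hg" unfolding wdist_def using wlen_inv[OF grp piA gen hgc] hgc by simp
      ultimately show ?thesis using mid LS unfolding gprod_def by argo
    qed
    have v0: "valid_pt G A (Vx g)" "valid_pt G A (Vx hg)" "valid_pt G A (Vx f')"
      using gc hgc f'c by (auto simp: valid_pt_def)
    have tr: "trim_at G A \<pi> (real_of_int \<delta>) \<sigma> L\<sigma> \<alpha> L\<alpha> L\<beta> \<and>
          trim_at G A \<pi> (real_of_int \<delta>) (revp \<sigma> L\<sigma>) L\<sigma> \<beta> L\<beta> L\<alpha> \<and>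
          trim_at G A \<pi> (real_of_int \<delta>) (revp \<alpha> L\<alpha>) L\<alpha> (revp \<beta> L\<beta>) L\<beta> L\<sigma>"
      using trim v0 gs ga gb unfolding all_trim_def by blast
    note geo = geo_lemma[where d = "cdist G A \<pi>" and V = "valid_pt G A" and \<sigma> = \<sigma> and \<alpha> = \<alpha> and \<beta> = \<beta>
        and T = L\<sigma> and La = L\<alpha> and Lb = L\<beta> and dl = "real_of_int \<delta>"]
    have G1: "\<And>t s. t \<in> {0..L\<sigma>} \<Longrightarrow> s \<in> {0..L\<alpha>} \<Longrightarrow> cdist G A \<pi> (\<sigma> t) (\<alpha> s) \<le> real_of_int \<delta> \<Longrightarrow>
         t \<le> (L\<sigma> + L\<alpha> - L\<beta>)/2 + 3 * real_of_int \<delta>"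
     and G2: "\<And>t s. t \<in> {0..L\<sigma>} \<Longrightarrow> s \<in> {0..L\<beta>} \<Longrightarrow> cdist G A \<pi> (\<sigma> t) (\<beta> s) \<le> real_of_int \<delta> \<Longrightarrow>
         t \<ge> (L\<sigma> + L\<alpha> - L\<beta>)/2 - 3 * real_of_int \<delta>"
    proof -
      note prem = cdist_tri[OF grp piA gen] cdist_sym[OF grp piA gen]
      have ps: "\<And>t. t \<in> {0..L\<sigma>} \<Longrightarrow> valid_pt G A (\<sigma> t)" "\<And>s t. s \<in> {0..L\<sigma>} \<Longrightarrow> t \<in> {0..L\<sigma>} \<Longrightarrow> cdist G A \<pi> (\<sigma> s) (\<sigma> t) = \<bar>s - t\<bar>"
        "\<sigma> 0 = Vx g" "\<sigma> L\<sigma> = Vx hg" "L\<sigma> \<ge> 0"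
        using gs unfolding geod_def by auto
      have pa: "\<And>t. t \<in> {0..L\<alpha>} \<Longrightarrow> valid_pt G A (\<alpha> t)" "\<And>s t. s \<in> {0..L\<alpha>} \<Longrightarrow> t \<in> {0..L\<alpha>} \<Longrightarrow> cdist G A \<pi> (\<alpha> s) (\<alpha> t) = \<bar>s - t\<bar>"
        "\<alpha> 0 = Vx g" "\<alpha> L\<alpha> = Vx f'" "L\<alpha> \<ge> 0"
        using ga unfolding geod_def by auto
      have pb: "\<And>t. t \<in> {0..L\<beta>} \<Longrightarrow> valid_pt G A (\<beta> t)" "\<And>s t. s \<in> {0..L\<beta>} \<Longrightarrow> t \<in> {0..L\<beta>} \<Longrightarrow> cdist G A \<pi> (\<beta> s) (\<beta> t) = \<bar>s - t\<bar>"
        "\<beta> 0 = Vx hg" "\<beta> L\<beta> = Vx f'" "L\<beta> \<ge> 0"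
        using gb unfolding geod_def by auto
      have t1: "\<And>\<tau>. 0 \<le> \<tau> \<Longrightarrow> \<tau> \<le> (L\<sigma> + L\<alpha> - L\<beta>)/2 \<Longrightarrow> cdist G A \<pi> (\<sigma> \<tau>) (\<alpha> \<tau>) \<le> real_of_int \<delta>"
        using tr unfolding trim_at_def by blast
      have t2: "\<And>\<tau>. 0 \<le> \<tau> \<Longrightarrow> \<tau> \<le> (L\<sigma> + L\<beta> - L\<alpha>)/2 \<Longrightarrow> cdist G A \<pi> (\<sigma> (L\<sigma> - \<tau>)) (\<beta> \<tau>) \<le> real_of_int \<delta>"
        using tr unfolding trim_at_def revp_def by blast
      have t3: "\<And>\<tau>. 0 \<le> \<tau> \<Longrightarrow> \<tau> \<le> (L\<alpha> + L\<beta> - L\<sigma>)/2 \<Longrightarrow> cdist G A \<pi> (\<alpha> (L\<alpha> - \<tau>)) (\<beta> (L\<beta> - \<tau>)) \<le> real_of_int \<delta>"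
        using tr unfolding trim_at_def revp_def by blast
      have dl0: "real_of_int \<delta> \<ge> 0" using delta by simp
      show "\<And>t s. t \<in> {0..L\<sigma>} \<Longrightarrow> s \<in> {0..L\<alpha>} \<Longrightarrow> cdist G A \<pi> (\<sigma> t) (\<alpha> s) \<le> real_of_int \<delta> \<Longrightarrow>
         t \<le> (L\<sigma> + L\<alpha> - L\<beta>)/2 + 3 * real_of_int \<delta>"
        using geo(1)[OF prem ps(1,2) pa(1,2) pb(1,2)] ps(3-5) pa(3-5) pb(3-5) t1 t2 t3 dl0 by simp
      show "\<And>t s. t \<in> {0..L\<sigma>} \<Longrightarrow> s \<in> {0..L\<beta>} \<Longrightarrow> cdist G A \<pi> (\<sigma> t) (\<beta> s) \<le> real_of_int \<delta> \<Longrightarrow>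
         t \<ge> (L\<sigma> + L\<alpha> - L\<beta>)/2 - 3 * real_of_int \<delta>"
        using geo(2)[OF prem ps(1,2) pa(1,2) pb(1,2)] ps(3-5) pa(3-5) pb(3-5) t1 t2 t3 dl0 by simp
    qed
    have S1r: "real (wlen G A \<pi> g) \<le> real (wlen G A \<pi> hg)" using S1 by simp
    have S2r: "real (wlen G A \<pi> hg) \<le> real (wlen G A \<pi> g) + 2 * real_of_int K1" using S2 by linarith
    from near show "b - a \<le> K2"
    proof
      assume NA: "\<forall>t \<in> {a..b}. \<exists>s \<in> {0..L\<alpha>}. cdist G A \<pi> (\<sigma> t) (\<alpha> s) \<le> real_of_int \<delta>"
      obtain s where "s \<in> {0..L\<alpha>}" "cdist G A \<pi> (\<sigma> b) (\<alpha> s) \<le> real_of_int \<delta>"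
        using bspec[OF NA, of b] ab by auto
      then have "b \<le> (L\<sigma> + L\<alpha> - L\<beta>)/2 + 3 * real_of_int \<delta>" using G1 ab by auto
      then have "2 * b \<le> L\<sigma> + L\<alpha> - L\<beta> + 6 * real_of_int \<delta>" by argo
      then show ?thesis unfolding K2_def using GP LAB1 S1r S2r by linarith
    next
      assume NB: "\<forall>t \<in> {a..b}. \<exists>s \<in> {0..L\<beta>}. cdist G A \<pi> (\<sigma> t) (\<beta> s) \<le> real_of_int \<delta>"
      obtain s where "s \<in> {0..L\<beta>}" "cdist G A \<pi> (\<sigma> a) (\<beta> s) \<le> real_of_int \<delta>"
        using bspec[OF NB, of a] ab by auto
      then have "a \<ge> (L\<sigma> + L\<alpha> - L\<beta>)/2 - 3 * real_of_int \<delta>" using G2 ab by auto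
      then have "2 * a \<ge> L\<sigma> + L\<alpha> - L\<beta> - 6 * real_of_int \<delta>" by argo
      then show ?thesis unfolding K2_def using GP LAB2 S1r S2r K1pos by linarith
    qed
  qed
qed

end
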